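(* Let $\gamma>1$ and let $(v,\tau,p)$ be a $C^2$ solution with $\tau>0$, $p>0$ of the system $$\partial_t v+v\partial_x v+\tau\partial_x p=0,\qquad \partial_t\tau+v\partial_x\tau-\tau\partial_x v=0,\qquad \partial_t p+v\partial_x p+\gamma p\,\partial_x v=0 .$$ Set $s=\sqrt{\gamma p/\tau}$, $\xi_1=v-\sqrt{\gamma p\tau}$, $\xi_2=v$, $\xi_3=v+\sqrt{\gamma p\tau}$, and $$\mathcal P_1=\partial_x v-\frac{\partial_x p}{s},\qquad \mathcal P_2=s\,\partial_x\tau+\frac{\partial_x p}{s},\qquad \mathcal P_3=\partial_x v+\frac{\partial_x p}{s}.$$ Then $\partial_t\mathcal P_k+\xi_k\partial_x\mathcal P_k=\mathbf F_k(\mathcal P_1,\mathcal P_2,\mathcal P_3)$ for $k=1,2,3$, where $$\mathbf F_1=-\tfrac{\gamma+1}{4}\mathcal P_1^2+\tfrac14\mathcal P_1\mathcal P_2-\tfrac{3-\gamma}{4}\mathcal P_1\mathcal P_3-\tfrac14\mathcal P_2\mathcal P_3,$$ $$\mathbf F_2=-\tfrac{\gamma+1}{4}\mathcal P_2(\mathcal P_1+\mathcal P_3),$$ $$\mathbf F_3=-\tfrac{\gamma+1}{4}\mathcal P_3^2+\tfrac14\mathcal P_1\mathcal P_2-\tfrac{3-\gamma}{4}\mathcal P_1\mathcal P_3-\tfrac14\mathcal P_2\mathcal P_3 .$$ In particular the right-hand sides are quadratic polynomials in $(\mathcal P_1,\mathcal P_2,\mathcal P_3)$ with constant coefficients, independent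 of $(v,\tau,p)$.
   Context: Here $v$ is velocity, $\tau=1/\rho$ is specific volume and $p$ is pressure of a polytropic gas with adiabatic exponent $\gamma$; the system is the 1D non-isentropic Euler system written in these variables. The $\xi_k$ are the eigenvalues of the system's coefficient matrix and $\mathcal P_k=l^k\cdot\partial_x(v,\tau,p)$ with left eigenvectors $l^1=(1,0,-s^{-1})$, $l^2=(0,s,s^{-1})$, $l^3=(1,0,s^{-1})$. *)

theory Defs
  imports "HOL-Analysis.Analysis"
begin

text \<open>Functions of (t,x) are modelled as maps real \<times> real \<Rightarrow> real; the first
coordinate is time t, the second is space x.\<close>

definition dt :: "(real \<times> real \<Rightarrow> real) \<Rightarrow> real \<times> real \<Rightarrow> real" where
  "dt f z = frechet_derivative f (at z) (1, 0)"

definition dx :: "(real \<times> real \<Rightarrow> real) \<Rightarrow> real \<times> real \<Rightarrow> real" where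
  "dx f z = frechet_derivative f (at z) (0, 1)"

definition C2_on :: "(real \<times> real) set \<Rightarrow> (real \<times> real \<Rightarrow> real) \<Rightarrow> bool" where
  "C2_on \<Omega> f \<longleftrightarrow>
     (\<forall>z\<in>\<Omega>. f differentiable (at z)) \<and>
     (\<forall>z\<in>\<Omega>. dt f differentiable (at z) \<and> dx f differentiable (at z)) \<and>
     continuous_on \<Omega> (dt (dt f)) \<and> continuous_on \<Omega> (dx (dt f)) \<and>
     continuous_on \<Omega> (dt (dx f)) \<and> continuous_on \<Omega> (dx (dx f))"

definition sfun :: "real \<Rightarrow> (real \<times> real \<Rightarrow> real) \<Rightarrow> (real \<times> real \<Rightarrow> real) \<Rightarrow> real \<times> real \<Rightarrow> real" where
  "sfun \<gamma> tau p z = sqrt (\<gamma> * p z / tau z)"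

definition P1 where
  "P1 \<gamma> v tau p z = dx v z - dx p z / sfun \<gamma> tau p z"
definition P2 where
  "P2 \<gamma> v tau p z = sfun \<gamma> tau p z * dx tau z + dx p z / sfun \<gamma> tau p z"
definition P3 where
  "P3 \<gamma> v tau p z = dx v z + dx p z / sfun \<gamma> tau p z"

definition xi1 where "xi1 \<gamma> v tau p z = v z - sqrt (\<gamma> * p z * tau z)"
definition xi2 where "xi2 \<gamma> v tau p z = v z"
definition xi3 where "xi3 \<gamma> v tau p z = v z + sqrt (\<gamma> * p z * tau z)"

definition F1 :: "real \<Rightarrow> real \<Rightarrow> real \<Rightarrow> real \<Rightarrow> real" where
  "F1 \<gamma> a b c = - (\<gamma> + 1) / 4 * a^2 + 1/4 * a * b - (3 - \<gamma>) / 4 * a * c - 1/4 * b * c"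
definition F2 :: "real \<Rightarrow> real \<Rightarrow> real \<Rightarrow> real \<Rightarrow> real" where
  "F2 \<gamma> a b c = - (\<gamma> + 1) / 4 * b * (a + c)"
definition F3 :: "real \<Rightarrow> real \<Rightarrow> real \<Rightarrow> real \<Rightarrow> real" where
  "F3 \<gamma> a b c = - (\<gamma> + 1) / 4 * c^2 + 1/4 * a * b - (3 - \<gamma>) / 4 * a * c - 1/4 * b * c"

end

theory Submission imports Defs begin


lemma fd_works: "f differentiable (at z) \<Longrightarrow> (f has_derivative frechet_derivative f (at z)) (at z)"
  using frechet_derivative_works by blast

lemma partial_t:
  fixes f :: "real \<times> real \<Rightarrow> real"
  assumes "f differentiable (at (s,y))"
  shows "((\<lambda>s. f (s,y)) has_real_derivative dt f (s,y)) (at s)"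
proof -
  let ?F = "frechet_derivative f (at (s,y))"
  have F: "(f has_derivative ?F) (at (s,y))" using fd_works[OF assms] .
  have P: "((\<lambda>s. (s,y)) has_derivative (\<lambda>h. (h,0))) (at s)"
    by (auto intro!: derivative_eq_intros)
  have C: "((\<lambda>s. f (s,y)) has_derivative (\<lambda>h. ?F (h,0))) (at s)"
    using has_derivative_compose[OF P F] by simp
  have L: "linear ?F" using has_derivative_linear[OF F] .
  have "?F (h,0) = dt f (s,y) * h" for h
  proof -
    have "?F (h,0) = ?F (h *\<^sub>R (1,0))" by simp
    also have "\<dots> = h *\<^sub>R ?F (1,0)" using linear_cmul[OF L] by blast
    finally show ?thesis by (simp add: dt_def)
  qed
  then have "(\<lambda>h. ?F (h,0)) = (*) (dt f (s,y))" by auto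
  with C show ?thesis by (simp add: has_field_derivative_def)
qed

lemma partial_x:
  fixes f :: "real \<times> real \<Rightarrow> real"
  assumes "f differentiable (at (s,y))"
  shows "((\<lambda>y. f (s,y)) has_real_derivative dx f (s,y)) (at y)"
proof -
  let ?F = "frechet_derivative f (at (s,y))"
  have F: "(f has_derivative ?F) (at (s,y))" using fd_works[OF assms] .
  have P: "((\<lambda>y. (s,y)) has_derivative (\<lambda>h. (0,h))) (at y)"
    by (auto intro!: derivative_eq_intros)
  have C: "((\<lambda>y. f (s,y)) has_derivative (\<lambda>h. ?F (0,h))) (at y)"
    using has_derivative_compose[OF P F] by simp
  have L: "linear ?F" using has_derivative_linear[OF F] .
  have "?F (0,h) = dx f (s,y) * h" for h
  proof -
    have "?F (0,h) = ?F (h *\<^sub>R (0,1))" by simp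
    also have "\<dots> = h *\<^sub>R ?F (0,1)" using linear_cmul[OF L] by blast
    finally show ?thesis by (simp add: dx_def)
  qed
  then have "(\<lambda>h. ?F (0,h)) = (*) (dx f (s,y))" by auto
  with C show ?thesis by (simp add: has_field_derivative_def)
qed

lemma clairaut:
  fixes f :: "real \<times> real \<Rightarrow> real"
  assumes "open \<Omega>" "(t,x) \<in> \<Omega>"
    and fd: "\<forall>w\<in>\<Omega>. f differentiable (at w)"
    and gd: "\<forall>w\<in>\<Omega>. dt f differentiable (at w) \<and> dx f differentiable (at w)"
    and c1: "continuous_on \<Omega> (dx (dt f))" and c2: "continuous_on \<Omega> (dt (dx f))"
  shows "dt (dx f) (t,x) = dx (dt f) (t,x)"
proof (rule ccontr)
  assume ne: "dt (dx f) (t,x) \<noteq> dx (dt f) (t,x)"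
  define A where "A = dx (dt f) (t,x)"
  define B where "B = dt (dx f) (t,x)"
  define e where "e = \<bar>A - B\<bar> / 2"
  have e: "e > 0" using ne by (simp add: A_def B_def e_def)
  obtain r where r: "r > 0" "ball (t,x) r \<subseteq> \<Omega>" using assms(1,2) open_contains_ball by blast
  obtain d1 where d1: "d1 > 0" "\<forall>w\<in>\<Omega>. dist w (t,x) < d1 \<longrightarrow> dist (dx (dt f) w) A < e"
    using c1 e assms(2) unfolding continuous_on_iff A_def by blast
  obtain d2 where d2: "d2 > 0" "\<forall>w\<in>\<Omega>. dist w (t,x) < d2 \<longrightarrow> dist (dt (dx f) w) B < e"
    using c2 e assms(2) unfolding continuous_on_iff B_def by blast
  define h where "h = min r (min d1 d2) / 4"
  have h: "h > 0" using r d1 d2 by (simp add: h_def)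
  have sq: "(s,y) \<in> \<Omega> \<and> \<bar>dx (dt f) (s,y) - A\<bar> < e \<and> \<bar>dt (dx f) (s,y) - B\<bar> < e"
    if "t \<le> s" "s \<le> t + h" "x \<le> y" "y \<le> x + h" for s y
  proof -
    have "dist (s,y) (t,x) \<le> \<bar>s - t\<bar> + \<bar>y - x\<bar>"
      unfolding dist_Pair_Pair dist_real_def using sqrt_sum_squares_le_sum_abs[of "s-t" "y-x"] by simp
    also have "\<dots> \<le> 2*h" using that by simp
    finally have D: "dist (s,y) (t,x) < min r (min d1 d2)" using h by (simp add: h_def)
    then have I: "(s,y) \<in> \<Omega>" using r by (auto simp: dist_commute)
    show ?thesis using I D d1 d2 by (auto simp: dist_real_def)
  qed
  define g where "g s = f (s, x+h) - f (s, x)" for s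
  have "\<exists>\<sigma>. t < \<sigma> \<and> \<sigma> < t + h \<and> g (t+h) - g t = h * (dt f (\<sigma>,x+h) - dt f (\<sigma>,x))"
  proof -
    have "\<exists>\<sigma>. t < \<sigma> \<and> \<sigma> < t + h \<and> g (t+h) - g t = (t + h - t) * (dt f (\<sigma>,x+h) - dt f (\<sigma>,x))"
    proof (rule MVT2)
      show "t < t + h" using h by simp
      fix s assume "t \<le> s" "s \<le> t + h"
      then have "(s,x+h) \<in> \<Omega>" "(s,x) \<in> \<Omega>" using sq h by auto
      then show "(g has_real_derivative dt f (s,x+h) - dt f (s,x)) (at s)"
        unfolding g_def using fd by (auto intro!: derivative_intros partial_t)
    qed
    then show ?thesis by simp
  qed
  then obtain \<sigma> where \<sigma>: "t < \<sigma>" "\<sigma> < t + h" "g (t+h) - g t = h * (dt f (\<sigma>,x+h) - dt f (\<sigma>,x))" by blast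
  have "\<exists>\<eta>. x < \<eta> \<and> \<eta> < x + h \<and> dt f (\<sigma>,x+h) - dt f (\<sigma>,x) = (x + h - x) * dx (dt f) (\<sigma>,\<eta>)"
  proof (rule MVT2)
    show "x < x + h" using h by simp
    fix y assume "x \<le> y" "y \<le> x + h"
    then have "(\<sigma>,y) \<in> \<Omega>" using sq \<sigma> by auto
    then show "((\<lambda>y. dt f (\<sigma>,y)) has_real_derivative dx (dt f) (\<sigma>,y)) (at y)"
      using gd by (auto intro!: partial_x)
  qed
  then obtain \<eta> where \<eta>: "x < \<eta>" "\<eta> < x + h" "dt f (\<sigma>,x+h) - dt f (\<sigma>,x) = h * dx (dt f) (\<sigma>,\<eta>)" by auto
  define g2 where "g2 y = f (t+h, y) - f (t, y)" for y
  have "\<exists>\<eta>. x < \<eta> \<and> \<eta> < x + h \<and> g2 (x+h) - g2 x = (x + h - x) * (dx f (t+h,\<eta>) - dx f (t,\<eta>))"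
  proof (rule MVT2)
    show "x < x + h" using h by simp
    fix y assume "x \<le> y" "y \<le> x + h"
    then have "(t+h,y) \<in> \<Omega>" "(t,y) \<in> \<Omega>" using sq h by auto
    then show "(g2 has_real_derivative dx f (t+h,y) - dx f (t,y)) (at y)"
      unfolding g2_def using fd by (auto intro!: derivative_intros partial_x)
  qed
  then obtain \<eta>' where \<eta>': "x < \<eta>'" "\<eta>' < x + h" "g2 (x+h) - g2 x = h * (dx f (t+h,\<eta>') - dx f (t,\<eta>'))" by auto
  have "\<exists>\<sigma>. t < \<sigma> \<and> \<sigma> < t + h \<and> dx f (t+h,\<eta>') - dx f (t,\<eta>') = (t + h - t) * dt (dx f) (\<sigma>,\<eta>')"
  proof (rule MVT2)
    show "t < t + h" using h by simp
    fix s assume "t \<le> s" "s \<le> t + h"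
    then have "(s,\<eta>') \<in> \<Omega>" using sq \<eta>' by auto
    then show "((\<lambda>s. dx f (s,\<eta>')) has_real_derivative dt (dx f) (s,\<eta>')) (at s)"
      using gd by (auto intro!: partial_t)
  qed
  then obtain \<sigma>' where \<sigma>': "t < \<sigma>'" "\<sigma>' < t + h" "dx f (t+h,\<eta>') - dx f (t,\<eta>') = h * dt (dx f) (\<sigma>',\<eta>')" by auto
  have "g (t+h) - g t = g2 (x+h) - g2 x" by (simp add: g_def g2_def)
  then have "h * (h * dx (dt f) (\<sigma>,\<eta>)) = h * (h * dt (dx f) (\<sigma>',\<eta>'))"
    using \<sigma> \<eta> \<eta>' \<sigma>' by simp
  then have eq: "dx (dt f) (\<sigma>,\<eta>) = dt (dx f) (\<sigma>',\<eta>')" using h by simp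
  have "\<bar>dx (dt f) (\<sigma>,\<eta>) - A\<bar> < e" using sq \<sigma> \<eta> by auto
  moreover have "\<bar>dt (dx f) (\<sigma>',\<eta>') - B\<bar> < e" using sq \<sigma>' \<eta>' by auto
  ultimately show False using eq unfolding e_def by (auto simp: abs_if split: if_splits)
qed



lemma alg:
  fixes g w T p wx Tx px wt Tt pt wxx Txx pxx wxt Txt pxt S St Sx c :: real
  assumes T: "T > 0" and S: "S > 0" and g: "g > 1" and gp: "p = S^2*T/g" and c: "c = S*T"
    and e1: "wt = -(w*wx) - T*px" and e2: "Tt = -(w*Tx) + T*wx" and e3: "pt = -(w*px) - g*p*wx"
    and f1: "wxt = - (wx*wx + w*wxx + Tx*px + T*pxx)"
    and f2: "Txt = - (wx*Tx + w*Txx - (Tx*wx + T*wxx))"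
    and f3: "pxt = - (wx*px + w*pxx + g*(px*wx + p*wxx))"
    and St: "St = g*(pt*T - p*Tt)/T^2/(2*S)" and Sx: "Sx = g*(px*T - p*Tx)/T^2/(2*S)"
  shows "(wxt - (pxt*S - px*St)/S^2) + (w - c)*(wxx - (pxx*S - px*Sx)/S^2)
           = F1 g (wx - px/S) (S*Tx + px/S) (wx + px/S)"
    "(St*Tx + S*Txt + (pxt*S - px*St)/S^2) + w*(Sx*Tx + S*Txx + (pxx*S - px*Sx)/S^2)
           = F2 g (wx - px/S) (S*Tx + px/S) (wx + px/S)"
    "(wxt + (pxt*S - px*St)/S^2) + (w + c)*(wxx + (pxx*S - px*Sx)/S^2)
           = F3 g (wx - px/S) (S*Tx + px/S) (wx + px/S)"
proof -
  have g0: "g \<noteq> 0" using g by simp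
  note defs = St Sx e1 e2 e3 f1 f2 f3 gp c F1_def F2_def F3_def
  show "(wxt - (pxt*S - px*St)/S^2) + (w - c)*(wxx - (pxx*S - px*Sx)/S^2)
           = F1 g (wx - px/S) (S*Tx + px/S) (wx + px/S)"
    unfolding defs using T S g0 by (simp add: field_simps) algebra
  show "(St*Tx + S*Txt + (pxt*S - px*St)/S^2) + w*(Sx*Tx + S*Txx + (pxx*S - px*Sx)/S^2)
           = F2 g (wx - px/S) (S*Tx + px/S) (wx + px/S)"
    unfolding defs using T S g0 by (simp add: field_simps) algebra
  show "(wxt + (pxt*S - px*St)/S^2) + (w + c)*(wxx + (pxx*S - px*Sx)/S^2)
           = F3 g (wx - px/S) (S*Tx + px/S) (wx + px/S)"
    unfolding defs using T S g0 by (simp add: field_simps) algebra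
qed


lemma hd_mul: "(a has_derivative A) (at z) \<Longrightarrow> (b has_derivative B) (at z) \<Longrightarrow>
  ((\<lambda>z. a z * b z :: real) has_derivative (\<lambda>u. A u * b z + a z * B u)) (at z)"
  by (auto intro!: derivative_eq_intros)

lemma hd_quot: "(a has_derivative A) (at z) \<Longrightarrow> (b has_derivative B) (at z) \<Longrightarrow> b z \<noteq> 0 \<Longrightarrow>
  ((\<lambda>z. a z / b z :: real) has_derivative (\<lambda>u. (A u * b z - a z * B u) / (b z)^2)) (at z)"
  by (auto intro!: derivative_eq_intros simp: field_simps power2_eq_square)

lemma hd_S:
  assumes "(q has_derivative Q) (at z)" "(T has_derivative TT) (at z)" "q z > 0" "T z > 0" "g > (0::real)"
  shows "((\<lambda>z. sqrt (g * q z / T z)) has_derivative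
     (\<lambda>u. g*(Q u * T z - q z * TT u)/(T z)^2/(2 * sqrt (g * q z / T z)))) (at z)"
proof -
  have 1: "((\<lambda>z. g * q z / T z) has_derivative (\<lambda>u. g*(Q u * T z - q z * TT u)/(T z)^2)) (at z)"
    using hd_quot[OF hd_mul[OF has_derivative_const[of g] assms(1)] assms(2)] assms
    by (simp add: algebra_simps)
  have 2: "0 < g * q z / T z" using assms by simp
  show ?thesis using has_derivative_real_sqrt[OF 2 1]
    by (simp add: divide_simps mult.commute)
qed

lemma loc_zero:
  assumes "open \<Omega>" "z \<in> \<Omega>" "\<forall>w\<in>\<Omega>. h w = (0::real)" "(h has_derivative H) (at z)"
  shows "H u = 0"
proof -
  have "(h has_derivative (\<lambda>_. 0)) (at z)"
    by (rule has_derivative_transform_within_open[OF has_derivative_const assms(1,2)]) (use assms(3) in auto)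
  then have "H = (\<lambda>_. 0)" using has_derivative_unique assms(4) by blast
  then show ?thesis by simp
qed



theorem mainTheorem3:
  fixes \<gamma> :: real and \<Omega> :: "(real \<times> real) set"
    and v tau p :: "real \<times> real \<Rightarrow> real"
  assumes "\<gamma> > 1" and "open \<Omega>"
    and "C2_on \<Omega> v" and "C2_on \<Omega> tau" and "C2_on \<Omega> p"
    and "\<forall>z\<in>\<Omega>. tau z > 0" and "\<forall>z\<in>\<Omega>. p z > 0"
    and "\<forall>z\<in>\<Omega>. dt v z + v z * dx v z + tau z * dx p z = 0"
    and "\<forall>z\<in>\<Omega>. dt tau z + v z * dx tau z - tau z * dx v z = 0"
    and "\<forall>z\<in>\<Omega>. dt p z + v z * dx p z + \<gamma> * p z * dx v z = 0"
  shows "\<forall>z\<in>\<Omega>.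
     dt (P1 \<gamma> v tau p) z + xi1 \<gamma> v tau p z * dx (P1 \<gamma> v tau p) z
       = F1 \<gamma> (P1 \<gamma> v tau p z) (P2 \<gamma> v tau p z) (P3 \<gamma> v tau p z) \<and>
     dt (P2 \<gamma> v tau p) z + xi2 \<gamma> v tau p z * dx (P2 \<gamma> v tau p) z
       = F2 \<gamma> (P1 \<gamma> v tau p z) (P2 \<gamma> v tau p z) (P3 \<gamma> v tau p z) \<and>
     dt (P3 \<gamma> v tau p) z + xi3 \<gamma> v tau p z * dx (P3 \<gamma> v tau p) z
       = F3 \<gamma> (P1 \<gamma> v tau p z) (P2 \<gamma> v tau p z) (P3 \<gamma> v tau p z)"
proof
  fix z assume z: "z \<in> \<Omega>"
  obtain t x where zt: "z = (t,x)" by (cases z)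
  have g0: "\<gamma> > 0" using assms(1) by simp
  have C2: "\<forall>w\<in>\<Omega>. f differentiable (at w)" "\<forall>w\<in>\<Omega>. dt f differentiable (at w) \<and> dx f differentiable (at w)"
     "continuous_on \<Omega> (dx (dt f))" "continuous_on \<Omega> (dt (dx f))"
    if "C2_on \<Omega> f" for f using that unfolding C2_on_def by auto
  have sym: "dt (dx f) z = dx (dt f) z" if "C2_on \<Omega> f" for f
    using clairaut[OF assms(2) z[unfolded zt] C2[OF that]] zt by simp
  have W: "(f has_derivative frechet_derivative f (at z)) (at z)"
     "(dx f has_derivative frechet_derivative (dx f) (at z)) (at z)"
     "(dt f has_derivative frechet_derivative (dt f) (at z)) (at z)"
    if "C2_on \<Omega> f" for f
    using C2[OF that] z by (auto intro: fd_works)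
  note Wv = W[OF assms(3)] and Wt = W[OF assms(4)] and Wp = W[OF assms(5)]
  have tz: "tau z > 0" and pz: "p z > 0" using assms(6,7) z by auto
  define S where "S = sfun \<gamma> tau p z"
  have Spos: "S > 0" using tz pz g0 by (simp add: S_def sfun_def)
  define SD where "SD u = \<gamma>*(frechet_derivative p (at z) u * tau z - p z * frechet_derivative tau (at z) u)/(tau z)^2/(2 * S)" for u
  have HS: "(sfun \<gamma> tau p has_derivative SD) (at z)"
    unfolding SD_def S_def using hd_S[OF Wp(1) Wt(1) pz tz g0] by (simp add: sfun_def[abs_def])
  have Sne: "sfun \<gamma> tau p z \<noteq> 0" using Spos S_def by simp
  have HQ: "((\<lambda>z. dx p z / sfun \<gamma> tau p z) has_derivative
      (\<lambda>u. (frechet_derivative (dx p) (at z) u * S - dx p z * SD u) / S^2)) (at z)"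
    using hd_quot[OF Wp(2) HS Sne] by (simp add: S_def)
  have HP1: "(P1 \<gamma> v tau p has_derivative
      (\<lambda>u. frechet_derivative (dx v) (at z) u - (frechet_derivative (dx p) (at z) u * S - dx p z * SD u) / S^2)) (at z)"
  proof -
    have "P1 \<gamma> v tau p = (\<lambda>z. dx v z - dx p z / sfun \<gamma> tau p z)" by (rule ext) (simp add: P1_def)
    then show ?thesis using has_derivative_diff[OF Wv(2) HQ] by simp
  qed
  have HP3: "(P3 \<gamma> v tau p has_derivative
      (\<lambda>u. frechet_derivative (dx v) (at z) u + (frechet_derivative (dx p) (at z) u * S - dx p z * SD u) / S^2)) (at z)"
  proof -
    have "P3 \<gamma> v tau p = (\<lambda>z. dx v z + dx p z / sfun \<gamma> tau p z)" by (rule ext) (simp add: P3_def)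
    then show ?thesis using has_derivative_add[OF Wv(2) HQ] by simp
  qed
  have HP2: "(P2 \<gamma> v tau p has_derivative
      (\<lambda>u. (SD u * dx tau z + S * frechet_derivative (dx tau) (at z) u) + (frechet_derivative (dx p) (at z) u * S - dx p z * SD u) / S^2)) (at z)"
  proof -
    have "P2 \<gamma> v tau p = (\<lambda>z. sfun \<gamma> tau p z * dx tau z + dx p z / sfun \<gamma> tau p z)" by (rule ext) (simp add: P2_def)
    then show ?thesis using has_derivative_add[OF hd_mul[OF HS Wt(2)] HQ] by (simp add: S_def)
  qed
  have fd: "frechet_derivative f (at z) = F" if "(f has_derivative F) (at z)" for f F
    using frechet_derivative_at[OF that] by simp
  have E1: "dx (dt v) z + (dx v z * dx v z + v z * dx (dx v) z) + (dx tau z * dx p z + tau z * dx (dx p) z) = 0"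
  proof -
    have H: "((\<lambda>z. dt v z + v z * dx v z + tau z * dx p z) has_derivative
      (\<lambda>u. frechet_derivative (dt v) (at z) u + (frechet_derivative v (at z) u * dx v z + v z * frechet_derivative (dx v) (at z) u)
          + (frechet_derivative tau (at z) u * dx p z + tau z * frechet_derivative (dx p) (at z) u))) (at z)"
      by (intro has_derivative_add hd_mul Wv Wt Wp)
    show ?thesis using loc_zero[OF assms(2) z _ H, of "(0,1)"] assms(8) by (simp add: dx_def)
  qed
  have E2: "dx (dt tau) z + (dx v z * dx tau z + v z * dx (dx tau) z) - (dx tau z * dx v z + tau z * dx (dx v) z) = 0"
  proof -
    have H: "((\<lambda>z. dt tau z + v z * dx tau z - tau z * dx v z) has_derivative
      (\<lambda>u. frechet_derivative (dt tau) (at z) u + (frechet_derivative v (at z) u * dx tau z + v z * frechet_derivative (dx tau) (at z) u)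
          - (frechet_derivative tau (at z) u * dx v z + tau z * frechet_derivative (dx v) (at z) u))) (at z)"
      by (intro has_derivative_add has_derivative_diff hd_mul Wv Wt Wp)
    show ?thesis using loc_zero[OF assms(2) z _ H, of "(0,1)"] assms(9) by (simp add: dx_def)
  qed
  have E3: "dx (dt p) z + (dx v z * dx p z + v z * dx (dx p) z) + \<gamma> * (dx p z * dx v z + p z * dx (dx v) z) = 0"
  proof -
    have H: "((\<lambda>z. dt p z + v z * dx p z + \<gamma> * (p z * dx v z)) has_derivative
      (\<lambda>u. frechet_derivative (dt p) (at z) u + (frechet_derivative v (at z) u * dx p z + v z * frechet_derivative (dx p) (at z) u)
          + \<gamma> * (frechet_derivative p (at z) u * dx v z + p z * frechet_derivative (dx v) (at z) u))) (at z)"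
      by (intro has_derivative_add has_derivative_mult_right hd_mul Wv Wt Wp)
    have Z: "\<forall>w\<in>\<Omega>. dt p w + v w * dx p w + \<gamma> * (p w * dx v w) = 0" using assms(10) by (simp add: mult.assoc)
    show ?thesis using loc_zero[OF assms(2) z Z H, of "(0,1)"] by (simp add: dx_def)
  qed
  have sv: "dt (dx v) z = dx (dt v) z" by (rule sym[OF assms(3)])
  have st: "dt (dx tau) z = dx (dt tau) z" by (rule sym[OF assms(4)])
  have sp: "dt (dx p) z = dx (dt p) z" by (rule sym[OF assms(5)])
  have c: "sqrt (\<gamma> * p z * tau z) = S * tau z"
  proof -
    have "\<gamma> * p z * tau z = (\<gamma> * p z / tau z) * (tau z)^2" using tz by (simp add: power2_eq_square)
    then have "sqrt (\<gamma> * p z * tau z) = sqrt (\<gamma> * p z / tau z) * sqrt ((tau z)^2)"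
      by (simp only: real_sqrt_mult)
    then have "sqrt (\<gamma> * p z * tau z) = sqrt (\<gamma> * p z / tau z) * tau z" using tz by simp
    then show ?thesis by (simp add: S_def sfun_def)
  qed
  have gp: "p z = S^2 * tau z / \<gamma>" using tz pz g0 by (simp add: S_def sfun_def)
  note A = alg[OF tz Spos assms(1) gp refl, where w="v z" and wx="dx v z" and Tx="dx tau z" and px="dx p z"
     and wt="dt v z" and Tt="dt tau z" and pt="dt p z" and wxx="dx (dx v) z" and Txx="dx (dx tau) z"
     and pxx="dx (dx p) z" and wxt="dt (dx v) z" and Txt="dt (dx tau) z" and pxt="dt (dx p) z"
     and St="SD (1,0)" and Sx="SD (0,1)"]
  have a1: "dt v z = - (v z * dx v z) - tau z * dx p z" using bspec[OF assms(8) z] by linarith 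
  have a2: "dt tau z = - (v z * dx tau z) + tau z * dx v z" using bspec[OF assms(9) z] by linarith
  have a3: "dt p z = - (v z * dx p z) - \<gamma> * p z * dx v z" using bspec[OF assms(10) z] by linarith
  have b1: "dt (dx v) z = - (dx v z * dx v z + v z * dx (dx v) z + dx tau z * dx p z + tau z * dx (dx p) z)"
    using E1 sv by linarith
  have b2: "dt (dx tau) z = - (dx v z * dx tau z + v z * dx (dx tau) z - (dx tau z * dx v z + tau z * dx (dx v) z))"
    using E2 st by linarith
  have b3: "dt (dx p) z = - (dx v z * dx p z + v z * dx (dx p) z + \<gamma> * (dx p z * dx v z + p z * dx (dx v) z))"
    using E3 sp by linarith
  have s1: "SD (1,0) = \<gamma> * (dt p z * tau z - p z * dt tau z) / (tau z)^2 / (2 * S)"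
    by (simp add: SD_def dt_def)
  have s2: "SD (0,1) = \<gamma> * (dx p z * tau z - p z * dx tau z) / (tau z)^2 / (2 * S)"
    by (simp add: SD_def dx_def)
  note AA = A[OF a1 a2 a3 b1 b2 b3 s1 s2]
  have PP: "P1 \<gamma> v tau p z = dx v z - dx p z / S" "P2 \<gamma> v tau p z = S * dx tau z + dx p z / S"
     "P3 \<gamma> v tau p z = dx v z + dx p z / S"
    by (simp_all add: P1_def P2_def P3_def S_def)
  show "dt (P1 \<gamma> v tau p) z + xi1 \<gamma> v tau p z * dx (P1 \<gamma> v tau p) z
       = F1 \<gamma> (P1 \<gamma> v tau p z) (P2 \<gamma> v tau p z) (P3 \<gamma> v tau p z) \<and>
     dt (P2 \<gamma> v tau p) z + xi2 \<gamma> v tau p z * dx (P2 \<gamma> v tau p) z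
       = F2 \<gamma> (P1 \<gamma> v tau p z) (P2 \<gamma> v tau p z) (P3 \<gamma> v tau p z) \<and>
     dt (P3 \<gamma> v tau p) z + xi3 \<gamma> v tau p z * dx (P3 \<gamma> v tau p) z
       = F3 \<gamma> (P1 \<gamma> v tau p z) (P2 \<gamma> v tau p z) (P3 \<gamma> v tau p z)"
    unfolding PP
    using AA fd[OF HP1] fd[OF HP2] fd[OF HP3]
    by (simp add: dt_def dx_def xi1_def xi2_def xi3_def c)
qed

end
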